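(* Let $X$ be a CAT(0) space, $T:X\to X$, $C\subseteq X$ nonempty and $\varphi:[0,\infty)\to[0,\infty)$ an increasing function vanishing only at $0$. If $T$ is uniformly firmly nonexpansive on $C$ with modulus $\varphi$, then $T$ is uniformly $(P_2)$ on $C$ with modulus $\varphi$.
   Context: A geodesic space $(X,d)$ is CAT(0) if for all $z\in X$, all geodesics $\gamma:[a,b]\to X$ and all $t\in[0,1]$, $d^2(z,\gamma((1-t)a+tb))\le(1-t)d^2(z,\gamma(a))+td^2(z,\gamma(b))-t(1-t)d^2(\gamma(a),\gamma(b))$; $(1-t)x+ty$ denotes the point at distance $t\,d(x,y)$ from $x$ on the unique geodesic from $x$ to $y$. $T$ is uniformly firmly nonexpansive on $C$ with modulus $\varphi$ if $T(C)\subseteq C$ and for all $x,y\in C$, $t\in[0,1]$: $d^2(Tx,Ty)\le d^2((1-t)x+tTx,(1-t)y+tTy)-2(1-t)\varphi(d(Tx,Ty))$. $T$ is uniformly $(P_2)$ on $C$ with modulus $\varphi$ if $T(C)\subseteq C$ and for all $x,y\in C$: $2d^2(Tx,Ty)\le d^2(x,Ty)+d^2(y,Tx)-d^2(x,Tx)-d^2(y,Ty)-2\varphi(d(Tx,Ty))$. *)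

theory Defs
  imports "HOL-Analysis.Analysis"
begin

text \<open>A metric on the whole type (the space X is the carrier UNIV of type 'a).\<close>
definition is_metric :: "('a \<Rightarrow> 'a \<Rightarrow> real) \<Rightarrow> bool" where
  "is_metric d \<longleftrightarrow> (\<forall>x y. d x y = 0 \<longleftrightarrow> x = y) \<and> (\<forall>x y. d x y = d y x)
     \<and> (\<forall>x y z. d x z \<le> d x y + d y z)"

definition geodesic :: "('a \<Rightarrow> 'a \<Rightarrow> real) \<Rightarrow> (real \<Rightarrow> 'a) \<Rightarrow> real \<Rightarrow> real \<Rightarrow> bool" where
  "geodesic d \<gamma> a b \<longleftrightarrow> a \<le> b \<and> (\<forall>s\<in>{a..b}. \<forall>t\<in>{a..b}. d (\<gamma> s) (\<gamma> t) = \<bar>s - t\<bar>)"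

definition geodesic_space :: "('a \<Rightarrow> 'a \<Rightarrow> real) \<Rightarrow> bool" where
  "geodesic_space d \<longleftrightarrow> is_metric d \<and>
     (\<forall>x y. \<exists>\<gamma> a b. geodesic d \<gamma> a b \<and> \<gamma> a = x \<and> \<gamma> b = y)"

definition CAT0 :: "('a \<Rightarrow> 'a \<Rightarrow> real) \<Rightarrow> bool" where
  "CAT0 d \<longleftrightarrow> geodesic_space d \<and>
     (\<forall>z \<gamma> a b t. geodesic d \<gamma> a b \<longrightarrow> t \<in> {0..1} \<longrightarrow>
        (d z (\<gamma> ((1 - t) * a + t * b)))\<^sup>2
          \<le> (1 - t) * (d z (\<gamma> a))\<^sup>2 + t * (d z (\<gamma> b))\<^sup>2 - t * (1 - t) * (d (\<gamma> a) (\<gamma> b))\<^sup>2)"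

text \<open>(1-t)x + ty: the point at parameter t on the (unique, in a CAT(0) space) geodesic from x to y.\<close>
definition geo_comb :: "('a \<Rightarrow> 'a \<Rightarrow> real) \<Rightarrow> real \<Rightarrow> 'a \<Rightarrow> 'a \<Rightarrow> 'a" where
  "geo_comb d t x y = (THE p. \<exists>\<gamma> a b. geodesic d \<gamma> a b \<and> \<gamma> a = x \<and> \<gamma> b = y
                                 \<and> p = \<gamma> ((1 - t) * a + t * b))"

definition unif_firmly_nonexp ::
  "('a \<Rightarrow> 'a \<Rightarrow> real) \<Rightarrow> ('a \<Rightarrow> 'a) \<Rightarrow> 'a set \<Rightarrow> (real \<Rightarrow> real) \<Rightarrow> bool" where
  "unif_firmly_nonexp d T C \<phi> \<longleftrightarrow> T ` C \<subseteq> C \<and>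
     (\<forall>x\<in>C. \<forall>y\<in>C. \<forall>t\<in>{0..1}.
        (d (T x) (T y))\<^sup>2 \<le> (d (geo_comb d t x (T x)) (geo_comb d t y (T y)))\<^sup>2
                            - 2 * (1 - t) * \<phi> (d (T x) (T y)))"

definition unif_P2 ::
  "('a \<Rightarrow> 'a \<Rightarrow> real) \<Rightarrow> ('a \<Rightarrow> 'a) \<Rightarrow> 'a set \<Rightarrow> (real \<Rightarrow> real) \<Rightarrow> bool" where
  "unif_P2 d T C \<phi> \<longleftrightarrow> T ` C \<subseteq> C \<and>
     (\<forall>x\<in>C. \<forall>y\<in>C.
        2 * (d (T x) (T y))\<^sup>2 \<le> (d x (T y))\<^sup>2 + (d y (T x))\<^sup>2 - (d x (T x))\<^sup>2 - (d y (T y))\<^sup>2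
                                - 2 * \<phi> (d (T x) (T y)))"

end

theory Submission
  imports Defs
begin

lemma geo_dists:
  assumes g: "geodesic d \<gamma> a b" and t: "t \<in> {0..1}"
  shows "d (\<gamma> a) (\<gamma> ((1-t)*a+t*b)) = t*(b-a)"
    and "d (\<gamma> ((1-t)*a+t*b)) (\<gamma> b) = (1-t)*(b-a)"
    and "d (\<gamma> a) (\<gamma> b) = b - a"
proof -
  have ab: "a \<le> b" and iso: "\<And>s u. s\<in>{a..b} \<Longrightarrow> u\<in>{a..b} \<Longrightarrow> d (\<gamma> s) (\<gamma> u) = \<bar>s - u\<bar>"
    using g unfolding geodesic_def by auto
  have t0: "0 \<le> t" "t \<le> 1" using t by auto
  have m: "(1-t)*a+t*b \<in> {a..b}"
  proof -
    have "(1-t)*a+t*b = a + t*(b-a)" by (simp add: algebra_simps)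
    moreover have "0 \<le> t*(b-a)" "t*(b-a) \<le> b - a"
      using t0 ab by (auto simp: mult_left_le_one_le)
    ultimately show ?thesis by auto
  qed
  have "d (\<gamma> a) (\<gamma> ((1-t)*a+t*b)) = \<bar>a - ((1-t)*a+t*b)\<bar>" using iso[OF _ m] ab by auto
  also have "\<dots> = \<bar>t*(b-a)\<bar>" by (simp add: algebra_simps)
  also have "\<dots> = t*(b-a)" using t0 ab by simp
  finally show "d (\<gamma> a) (\<gamma> ((1-t)*a+t*b)) = t*(b-a)" .
  have "d (\<gamma> ((1-t)*a+t*b)) (\<gamma> b) = \<bar>((1-t)*a+t*b) - b\<bar>" using iso[OF m] ab by auto
  also have "\<dots> = \<bar>(1-t)*(b-a)\<bar>" by (simp add: algebra_simps)
  also have "\<dots> = (1-t)*(b-a)" using t0 ab by simp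
  finally show "d (\<gamma> ((1-t)*a+t*b)) (\<gamma> b) = (1-t)*(b-a)" .
  show "d (\<gamma> a) (\<gamma> b) = b - a" using iso[of a b] ab by auto
qed

lemma geo_unique:
  assumes c: "CAT0 d" and t: "t \<in> {0..1}"
    and g1: "geodesic d \<gamma>1 a1 b1" "\<gamma>1 a1 = x" "\<gamma>1 b1 = y"
    and g2: "geodesic d \<gamma>2 a2 b2" "\<gamma>2 a2 = x" "\<gamma>2 b2 = y"
  shows "\<gamma>1 ((1-t)*a1+t*b1) = \<gamma>2 ((1-t)*a2+t*b2)"
proof -
  let ?p = "\<gamma>1 ((1-t)*a1+t*b1)" and ?q = "\<gamma>2 ((1-t)*a2+t*b2)"
  have met: "is_metric d" using c unfolding CAT0_def geodesic_space_def by auto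
  have sym: "\<And>u v. d u v = d v u" and z: "\<And>u v. d u v = 0 \<longleftrightarrow> u = v"
    using met unfolding is_metric_def by auto
  have ineq: "(d ?p ?q)\<^sup>2 \<le> (1 - t) * (d ?p (\<gamma>2 a2))\<^sup>2 + t * (d ?p (\<gamma>2 b2))\<^sup>2
        - t * (1 - t) * (d (\<gamma>2 a2) (\<gamma>2 b2))\<^sup>2"
    using c g2(1) t unfolding CAT0_def by blast
  define L where "L = d x y"
  have L: "L = b1 - a1" using geo_dists(3)[OF g1(1) t] g1 L_def by simp
  have "d ?p (\<gamma>2 a2) = t * L" using geo_dists(1)[OF g1(1) t] g1 g2 L sym by metis
  moreover have "d ?p (\<gamma>2 b2) = (1-t) * L" using geo_dists(2)[OF g1(1) t] g1 g2 L by metis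
  moreover have "d (\<gamma>2 a2) (\<gamma>2 b2) = L" using g2 L_def by simp
  ultimately have "(d ?p ?q)\<^sup>2 \<le> (1 - t) * (t*L)\<^sup>2 + t * ((1-t)*L)\<^sup>2 - t * (1 - t) * L\<^sup>2"
    using ineq by simp
  also have "\<dots> = 0" by (simp add: power2_eq_square algebra_simps)
  finally have "d ?p ?q = 0" by simp
  thus ?thesis using z by simp
qed

lemma geo_comb_ineq:
  assumes c: "CAT0 d" and t: "t \<in> {0..1}"
  shows "(d z (geo_comb d t x y))\<^sup>2 \<le> (1 - t) * (d z x)\<^sup>2 + t * (d z y)\<^sup>2 - t * (1 - t) * (d x y)\<^sup>2"
proof -
  obtain \<gamma> a b where g: "geodesic d \<gamma> a b" "\<gamma> a = x" "\<gamma> b = y"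
    using c unfolding CAT0_def geodesic_space_def by blast
  have "geo_comb d t x y = \<gamma> ((1-t)*a+t*b)"
    unfolding geo_comb_def
  proof (rule the_equality)
    show "\<exists>\<gamma>' a' b'. geodesic d \<gamma>' a' b' \<and> \<gamma>' a' = x \<and> \<gamma>' b' = y \<and> \<gamma> ((1-t)*a+t*b) = \<gamma>' ((1-t)*a'+t*b')"
      using g by blast
  next
    fix p assume "\<exists>\<gamma>' a' b'. geodesic d \<gamma>' a' b' \<and> \<gamma>' a' = x \<and> \<gamma>' b' = y \<and> p = \<gamma>' ((1-t)*a'+t*b')"
    then obtain \<gamma>' a' b' where "geodesic d \<gamma>' a' b'" "\<gamma>' a' = x" "\<gamma>' b' = y" "p = \<gamma>' ((1-t)*a'+t*b')"
      by blast
    thus "p = \<gamma> ((1-t)*a+t*b)" using geo_unique[OF c t _ _ _ g] by metis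
  qed
  thus ?thesis using c g t unfolding CAT0_def by auto
qed

lemma limit_arg:
  fixes c K :: real
  assumes "\<And>t. 0 \<le> t \<Longrightarrow> t < 1 \<Longrightarrow> c \<le> (1-t)*K"
  shows "c \<le> 0"
proof (rule ccontr)
  assume "\<not> c \<le> 0"
  hence c0: "c > 0" by simp
  have "c \<le> K" using assms[of 0] by simp
  hence K0: "K > 0" using c0 by simp
  define s where "s = min 1 (c/(2*K))"
  have s0: "0 < s" "s \<le> 1" "s \<le> c/(2*K)" using c0 K0 by (auto simp: s_def)
  have "c \<le> s*K" using assms[of "1-s"] s0 by simp
  also have "\<dots> \<le> c/(2*K)*K" using s0 K0 by (intro mult_right_mono) auto
  also have "\<dots> = c/2" using K0 by simp
  finally show False using c0 by simp
qed

theorem proposition4p2: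
  fixes d :: "'a \<Rightarrow> 'a \<Rightarrow> real" and T :: "'a \<Rightarrow> 'a" and C :: "'a set"
    and \<phi> :: "real \<Rightarrow> real"
  assumes "CAT0 d"
    and "C \<noteq> {}"
    and "\<forall>s\<ge>0. \<phi> s \<ge> 0"
    and "mono_on {0..} \<phi>"
    and "\<forall>s\<ge>0. \<phi> s = 0 \<longleftrightarrow> s = 0"
    and "unif_firmly_nonexp d T C \<phi>"
  shows "unif_P2 d T C \<phi>"
proof -
  have sym: "\<And>u v. d u v = d v u"
    using assms(1) unfolding CAT0_def geodesic_space_def is_metric_def by auto
  have TC: "T ` C \<subseteq> C" and F: "\<And>x y t. x\<in>C \<Longrightarrow> y\<in>C \<Longrightarrow> t\<in>{0..1} \<Longrightarrow>
        (d (T x) (T y))\<^sup>2 \<le> (d (geo_comb d t x (T x)) (geo_comb d t y (T y)))\<^sup>2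
                            - 2 * (1 - t) * \<phi> (d (T x) (T y))"
    using assms(6) unfolding unif_firmly_nonexp_def by auto
  show ?thesis unfolding unif_P2_def
  proof (intro conjI TC ballI)
    fix x y assume x: "x \<in> C" and y: "y \<in> C"
    define D where "D = (d (T x) (T y))\<^sup>2"
    define A where "A = (d x (T y))\<^sup>2 + (d y (T x))\<^sup>2 - (d x (T x))\<^sup>2 - (d y (T y))\<^sup>2"
    define E where "E = (d x y)\<^sup>2"
    define ph where "ph = \<phi> (d (T x) (T y))"
    have "2*D - A + 2*ph \<le> 0"
    proof (rule limit_arg[where K = "E + D - A"])
      fix t :: real assume t0: "0 \<le> t" and t1: "t < 1"
      have t: "t \<in> {0..1}" using t0 t1 by auto
      define yt where "yt = geo_comb d t y (T y)"
      have I1: "(d yt (geo_comb d t x (T x)))\<^sup>2 \<le> (1 - t) * (d yt x)\<^sup>2 + t * (d yt (T x))\<^sup>2 - t * (1 - t) * (d x (T x))\<^sup>2"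
        by (rule geo_comb_ineq[OF assms(1) t])
      have I2: "(d x yt)\<^sup>2 \<le> (1 - t) * (d x y)\<^sup>2 + t * (d x (T y))\<^sup>2 - t * (1 - t) * (d y (T y))\<^sup>2"
        unfolding yt_def by (rule geo_comb_ineq[OF assms(1) t])
      have I3: "(d (T x) yt)\<^sup>2 \<le> (1 - t) * (d (T x) y)\<^sup>2 + t * (d (T x) (T y))\<^sup>2 - t * (1 - t) * (d y (T y))\<^sup>2"
        unfolding yt_def by (rule geo_comb_ineq[OF assms(1) t])
      have F1: "D \<le> (d (geo_comb d t x (T x)) yt)\<^sup>2 - 2 * (1 - t) * ph"
        using F[OF x y t] unfolding D_def ph_def yt_def .
      have J2: "(1-t) * (d x yt)\<^sup>2 \<le> (1-t) * ((1 - t) * (d x y)\<^sup>2 + t * (d x (T y))\<^sup>2 - t * (1 - t) * (d y (T y))\<^sup>2)"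
        using I2 t1 by (intro mult_left_mono) auto
      have J3: "t * (d (T x) yt)\<^sup>2 \<le> t * ((1 - t) * (d (T x) y)\<^sup>2 + t * (d (T x) (T y))\<^sup>2 - t * (1 - t) * (d y (T y))\<^sup>2)"
        using I3 t0 by (intro mult_left_mono) auto
      have "D \<le> (1-t)*((1 - t) * E + t * (d x (T y))\<^sup>2 - t * (1 - t) * (d y (T y))\<^sup>2)
              + t * ((1 - t) * (d y (T x))\<^sup>2 + t * D - t * (1 - t) * (d y (T y))\<^sup>2)
              - t * (1 - t) * (d x (T x))\<^sup>2 - 2 * (1 - t) * ph"
        using F1 I1 J2 J3 sym[of yt x] sym[of yt "T x"] sym[of "geo_comb d t x (T x)" yt] sym[of "T x" y]
        unfolding D_def E_def by simp
      hence "(1-t) * (2*D - A + 2*ph) \<le> (1-t) * ((1-t) * (E + D - A))"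
        unfolding A_def by (simp add: algebra_simps power2_eq_square)
      thus "2*D - A + 2*ph \<le> (1-t) * (E + D - A)" using t1 by simp
    qed
    thus "2 * (d (T x) (T y))\<^sup>2 \<le> (d x (T y))\<^sup>2 + (d y (T x))\<^sup>2 - (d x (T x))\<^sup>2 - (d y (T y))\<^sup>2
                                - 2 * \<phi> (d (T x) (T y))"
      unfolding D_def A_def ph_def by simp
  qed
qed

end
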